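(* Let $D$ be a Euclidean domain with fraction field $K$, and let $R(D)$ be the subring of $K$ generated by the set $\{1/d \mid d \in D\setminus\{0\}\}$. Suppose $D$ is not Egyptian. Then $R(D)$ is a discrete valuation ring (of rank one, not a field), and the set consisting of the units of $D$ together with $0$ is a field.
   Context: A Euclidean function on an integral domain $D$ is a function $f: D\setminus\{0\} \to \mathbb{Z}$ such that for all nonzero $a,b \in D$: (1) $f(ab) \geq f(a)$, and (2) there exist $q,r \in D$ with $b = aq + r$ and either $r=0$ or $f(r) < f(a)$. A Euclidean domain is an integral domain admitting a Euclidean function. An element of $K$ is called $D$-Egyptian if it is a sum of reciprocals of distinct nonzero elements of $D$. The domain $D$ is called Egyptian if every nonzero element of $K$ is $D$-Egyptian. *)

theory Defs
  imports "HOL-Computational_Algebra.Fraction_Field"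
begin

text \<open>The integral domain D is a type 'a :: idom; its fraction field K is 'a fract,
  with D embedded via d \<mapsto> Fract d 1.\<close>

definition euclidean_function :: "('a::idom \<Rightarrow> int) \<Rightarrow> bool" where
  "euclidean_function f \<longleftrightarrow>
     (\<forall>a b. a \<noteq> 0 \<and> b \<noteq> 0 \<longrightarrow>
        f (a * b) \<ge> f a \<and> (\<exists>q r. b = a * q + r \<and> (r = 0 \<or> f r < f a)))"

definition euclidean_domain :: "'a::idom itself \<Rightarrow> bool" where
  "euclidean_domain _ \<longleftrightarrow> (\<exists>f :: 'a \<Rightarrow> int. euclidean_function f)"

definition D_egyptian :: "'a::idom fract \<Rightarrow> bool" where
  "D_egyptian x \<longleftrightarrow>
     (\<exists>S :: 'a set. finite S \<and> 0 \<notin> S \<and> x = (\<Sum>d\<in>S. inverse (Fract d 1)))"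

definition egyptian_domain :: "'a::idom itself \<Rightarrow> bool" where
  "egyptian_domain _ \<longleftrightarrow> (\<forall>x :: 'a fract. x \<noteq> 0 \<longrightarrow> D_egyptian x)"

inductive_set gen_subring :: "'b::comm_ring_1 set \<Rightarrow> 'b set" for A where
  base: "x \<in> A \<Longrightarrow> x \<in> gen_subring A"
| one: "1 \<in> gen_subring A"
| add: "x \<in> gen_subring A \<Longrightarrow> y \<in> gen_subring A \<Longrightarrow> x + y \<in> gen_subring A"
| neg: "x \<in> gen_subring A \<Longrightarrow> - x \<in> gen_subring A"
| mult: "x \<in> gen_subring A \<Longrightarrow> y \<in> gen_subring A \<Longrightarrow> x * y \<in> gen_subring A"

definition R_of :: "'a::idom itself \<Rightarrow> 'a fract set" where
  "R_of _ = gen_subring {inverse (Fract d 1) | d :: 'a. d \<noteq> 0}"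

definition discrete_valuation :: "('k::field \<Rightarrow> int) \<Rightarrow> bool" where
  "discrete_valuation v \<longleftrightarrow>
     (\<forall>n. \<exists>x. x \<noteq> 0 \<and> v x = n) \<and>
     (\<forall>x y. x \<noteq> 0 \<and> y \<noteq> 0 \<longrightarrow> v (x * y) = v x + v y) \<and>
     (\<forall>x y. x \<noteq> 0 \<and> y \<noteq> 0 \<and> x + y \<noteq> 0 \<longrightarrow> v (x + y) \<ge> min (v x) (v y))"

text \<open>A subring R of the field K is a discrete valuation ring (of rank one, not a field)
  iff it is the valuation ring {0} \<union> {x \<noteq> 0. v x \<ge> 0} of a discrete valuation v on K.\<close>
definition is_DVR_in :: "'k::field set \<Rightarrow> bool" where
  "is_DVR_in R \<longleftrightarrow> (\<exists>v. discrete_valuation v \<and> R = {x. x = 0 \<or> v x \<ge> 0})"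

definition subfield_of :: "'b::comm_ring_1 set \<Rightarrow> bool" where
  "subfield_of S \<longleftrightarrow> 0 \<in> S \<and> 1 \<in> S \<and>
     (\<forall>x\<in>S. \<forall>y\<in>S. x + y \<in> S \<and> x * y \<in> S) \<and> (\<forall>x\<in>S. - x \<in> S) \<and>
     (\<forall>x\<in>S. x \<noteq> 0 \<longrightarrow> (\<exists>y\<in>S. x * y = 1))"

end

theory Submission
  imports Defs Complex_Main
begin


lemma R_base: "(d::'a::idom) \<noteq> 0 \<Longrightarrow> inverse (Fraction_Field.Fract d 1) \<in> R_of TYPE('a)"
  unfolding R_of_def by (rule gen_subring.base) blast
lemma R_one: "(1::'a::idom fract) \<in> R_of TYPE('a)"
  unfolding R_of_def by (rule gen_subring.one)
lemma R_add: "(x::'a::idom fract) \<in> R_of TYPE('a) \<Longrightarrow> y \<in> R_of TYPE('a) \<Longrightarrow> x + y \<in> R_of TYPE('a)"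
  unfolding R_of_def by (rule gen_subring.add)
lemma R_mult: "(x::'a::idom fract) \<in> R_of TYPE('a) \<Longrightarrow> y \<in> R_of TYPE('a) \<Longrightarrow> x * y \<in> R_of TYPE('a)"
  unfolding R_of_def by (rule gen_subring.mult)
lemma R_neg: "(x::'a::idom fract) \<in> R_of TYPE('a) \<Longrightarrow> - x \<in> R_of TYPE('a)"
  unfolding R_of_def by (rule gen_subring.neg)
lemma R_diff: "(x::'a::idom fract) \<in> R_of TYPE('a) \<Longrightarrow> y \<in> R_of TYPE('a) \<Longrightarrow> x - y \<in> R_of TYPE('a)"
  using R_add R_neg by (metis diff_conv_add_uminus)
lemma R_zero: "(0::'a::idom fract) \<in> R_of TYPE('a)"
  using R_diff[OF R_one R_one] by simp
lemma R_pow: "(x::'a::idom fract) \<in> R_of TYPE('a) \<Longrightarrow> x ^ n \<in> R_of TYPE('a)"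
  by (induction n) (auto intro: R_one R_mult)
lemma R_unit: assumes "(u::'a::idom) dvd 1" shows "Fraction_Field.Fract u 1 \<in> R_of TYPE('a)"
proof -
  obtain w where w: "1 = u * w" using assms by (auto elim: dvdE)
  then have "w \<noteq> 0" by auto
  have "Fraction_Field.Fract u 1 = inverse (Fraction_Field.Fract w 1)"
    using \<open>w \<noteq> 0\<close> w by (simp add: eq_fract mult.commute)
  then show ?thesis using R_base[OF \<open>w \<noteq> 0\<close>] by simp
qed
lemma R_emb_unit0: "(u::'a::idom) = 0 \<or> u dvd 1 \<Longrightarrow> Fraction_Field.Fract u 1 \<in> R_of TYPE('a)"
  using R_unit R_zero by (metis fract_collapse(1))

definition sr :: "'a::idom list \<Rightarrow> 'a fract" where
  "sr L = (\<Sum>d\<leftarrow>L. inverse (Fraction_Field.Fract d 1))"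

lemma sr_Nil [simp]: "sr [] = 0" by (simp add: sr_def)
lemma sr_Cons [simp]: "sr (d # L) = inverse (Fraction_Field.Fract d 1) + sr L" by (simp add: sr_def)
lemma sr_append [simp]: "sr (L1 @ L2) = sr L1 + sr L2" by (simp add: sr_def)

lemma inv_neg: "inverse (Fraction_Field.Fract (- d) 1) = - inverse (Fraction_Field.Fract (d::'a::idom) 1)"
  by (cases "d = 0") (simp_all add: eq_fract fract_collapse)

lemma Fract_one_neg: "Fraction_Field.Fract 1 (- a) = - Fraction_Field.Fract 1 (a::'a::idom)"
  by (metis minus_fract minus_fract_cancel minus_minus)

lemma sr_neg: "sr (map uminus L) = - sr (L::'a::idom list)"
  by (induction L) (simp_all add: Fract_one_neg)

lemma inv_mult: "inverse (Fraction_Field.Fract (a * b) 1) = inverse (Fraction_Field.Fract a 1) * inverse (Fraction_Field.Fract (b::'a::idom) 1)"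
  by simp

lemma sr_scale: "sr (map (\<lambda>b. a * b) L) = inverse (Fraction_Field.Fract a 1) * sr (L::'a::idom list)"
  by (induction L) (simp_all add: algebra_simps)

lemma sr_prod: "sr (concat (map (\<lambda>a. map (\<lambda>b. a * b) L2) L1)) = sr L1 * sr (L2::'a::idom list)"
  by (induction L1) (simp_all add: sr_scale algebra_simps)

lemma R_sr: assumes "z \<in> R_of TYPE('a::idom)" shows "\<exists>L. 0 \<notin> set L \<and> z = sr (L::'a list)"
  using assms unfolding R_of_def
proof (induction rule: gen_subring.induct)
  case (base x)
  then obtain d where "x = inverse (Fraction_Field.Fract d 1)" "d \<noteq> 0" by blast
  then show ?case by (intro exI[of _ "[d]"]) simp
next
  case one
  show ?case by (intro exI[of _ "[1]"]) (simp add: fract_collapse)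
next
  case (add x y)
  then obtain L1 L2 where "0 \<notin> set L1" "x = sr L1" "0 \<notin> set L2" "y = sr L2" by blast
  then show ?case by (intro exI[of _ "L1 @ L2"]) simp
next
  case (neg x)
  then obtain L1 where "0 \<notin> set L1" "x = sr L1" by blast
  then show ?case by (intro exI[of _ "map uminus L1"]) (auto simp: sr_neg)
next
  case (mult x y)
  then obtain L1 L2 where "0 \<notin> set L1" "x = sr L1" "0 \<notin> set L2" "y = sr L2" by blast
  then show ?case by (intro exI[of _ "concat (map (\<lambda>a. map (\<lambda>b. a * b) L2) L1)"]) (auto simp: sr_prod)
qed

definition CLprop :: "'a::idom itself \<Rightarrow> bool" where
  "CLprop _ \<longleftrightarrow> (\<forall>(S::'a set) d. finite S \<longrightarrow> 0 \<notin> S \<longrightarrow> d \<noteq> 0 \<longrightarrow>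
      D_egyptian ((\<Sum>s\<in>S. inverse (Fraction_Field.Fract s 1)) + inverse (Fraction_Field.Fract d 1)))"

lemma CL_sr: assumes "CLprop TYPE('a::idom)" "0 \<notin> set (L::'a list)" shows "D_egyptian (sr L)"
  using assms(2)
proof (induction L)
  case Nil
  show ?case unfolding D_egyptian_def by (intro exI[of _ "{}"]) simp
next
  case (Cons d L)
  then obtain S where S: "finite S" "0 \<notin> S" "sr L = (\<Sum>s\<in>S. inverse (Fraction_Field.Fract s 1))"
    unfolding D_egyptian_def by auto
  have "D_egyptian ((\<Sum>s\<in>S. inverse (Fraction_Field.Fract s 1)) + inverse (Fraction_Field.Fract d 1))"
    using assms(1) S Cons.prems unfolding CLprop_def by auto
  then show ?case using S by (simp add: add.commute)
qed

lemma fract_two: "(2::'a::idom fract) = Fraction_Field.Fract 2 1"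
  using of_nat_fract[of 2, where 'a='a] by simp

lemma CL_two: assumes "(2::'a::idom) = 0 \<or> (2::'a) dvd 1" shows "CLprop TYPE('a)"
proof -
  have "finite S \<Longrightarrow> 0 \<notin> S \<Longrightarrow> d \<noteq> 0 \<Longrightarrow>
      D_egyptian ((\<Sum>s\<in>S. inverse (Fraction_Field.Fract s 1)) + inverse (Fraction_Field.Fract d 1))" for S and d :: 'a
  proof (induction "card S" arbitrary: S d rule: less_induct)
    case less
    show ?case
    proof (cases "d \<in> S")
      case False
      then show ?thesis unfolding D_egyptian_def using less.prems
        by (intro exI[of _ "insert d S"]) (simp add: add.commute)
    next
      case True
      have eq: "(\<Sum>s\<in>S. inverse (Fraction_Field.Fract s 1)) + inverse (Fraction_Field.Fract d 1)
          = (\<Sum>s\<in>S - {d}. inverse (Fraction_Field.Fract s 1)) + 2 * inverse (Fraction_Field.Fract d 1)"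
        using sum.remove[OF less.prems(1) True, of "\<lambda>s. inverse (Fraction_Field.Fract s 1)"] by simp
      have cS: "card (S - {d}) < card S" using True less.prems(1) by (meson card_Diff1_less)
      show ?thesis
      proof (cases "(2::'a) = 0")
        case True
        then have "(2::'a fract) = 0" by (simp add: fract_two fract_collapse)
        then show ?thesis unfolding eq D_egyptian_def using less.prems
          by (intro exI[of _ "S - {d}"]) auto
      next
        case False
        then obtain h :: 'a where h: "1 = 2 * h" using assms by (auto elim: dvdE)
        have "d * h \<noteq> 0" using h less.prems by auto
        have "2 * inverse (Fraction_Field.Fract d 1) = inverse (Fraction_Field.Fract (d * h) 1)"
          using less.prems h \<open>d * h \<noteq> 0\<close> by (simp add: fract_two eq_fract algebra_simps)
        then show ?thesis unfolding eq using less.hyps[OF cS, of "d * h"] less.prems \<open>d * h \<noteq> 0\<close>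
          by auto
      qed
    qed
  qed
  then show ?thesis unfolding CLprop_def by blast
qed



lemma greedy:
  fixes a c B :: nat
  assumes "0 < a" "a < c" "B * a < c"
  shows "\<exists>S. finite S \<and> (\<forall>n\<in>S. B < n) \<and> (\<Sum>n\<in>S. 1 / real n) = real a / real c"
  using assms
proof (induction a arbitrary: c B rule: less_induct)
  case (less a)
  define q where "q = (c - 1) div a"
  define n where "n = q + 1"
  have qa: "q * a \<le> c - 1" unfolding q_def by (metis div_mult_mod_eq le_add1)
  have qa2: "c - 1 < (q + 1) * a" unfolding q_def
    using less.prems(1) by (metis add.commute div_mult_mod_eq mod_less_divisor mult.commute add_less_cancel_left distrib_right mult_1 )
  have c1: "c \<le> n * a" using qa2 unfolding n_def by linarith
  have c2: "(n - 1) * a < c" using qa less.prems unfolding n_def by simp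
  have n1: "1 \<le> n" unfolding n_def by simp
  have Bn: "B < n"
  proof (rule ccontr)
    assume "\<not> B < n" then have "n * a \<le> B * a" by simp
    then show False using c1 less.prems(3) by linarith
  qed
  show ?case
  proof (cases "n * a = c")
    case True
    have "real a / real c = 1 / real n"
      using True less.prems n1 by (simp add: field_simps flip: of_nat_mult)
    then show ?thesis using Bn by (intro exI[of _ "{n}"]) simp
  next
    case False
    define a' where "a' = n * a - c"
    define c' where "c' = c * n"
    have a'pos: "0 < a'" using False c1 unfolding a'_def by simp
    have a'lt: "a' < a" using c2 c1 n1 unfolding a'_def
      by (simp add: algebra_simps diff_mult_distrib)
    have "a' < c'" using a'lt less.prems n1 unfolding c'_def
      by (metis dual_order.strict_trans less_le_trans mult.right_neutral mult_le_mono2)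
    have "n * a < 2 * c"
    proof -
      have "n * a = (n - 1) * a + a" using n1 by (simp add: algebra_simps diff_mult_distrib)
      then show ?thesis using c2 less.prems(2) by linarith
    qed
    then have "n*a - c < c" by linarith
    then have "(n*a - c) * n < c * n" using n1 by simp
    then have "n * a' < c'" unfolding a'_def c'_def by (simp add: mult.commute)
    then obtain S where S: "finite S" "\<forall>m\<in>S. n < m" "(\<Sum>m\<in>S. 1 / real m) = real a' / real c'"
      using less.IH[OF a'lt a'pos \<open>a' < c'\<close>] by blast
    have nS: "n \<notin> S" using S(2) by auto
    have cpos: "0 < c" using less.prems by simp
    have "1 / real n + real a' / real c' = real a / real c"
    proof -
      have "real a' = real n * real a - real c" unfolding a'_def using c1
        by (simp add: of_nat_diff)
      then show ?thesis unfolding c'_def using cpos n1 by (simp add: field_simps)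
    qed
    then show ?thesis using S nS Bn
      by (intro exI[of _ "insert n S"]) auto
  qed
qed

lemma harm_block:
  assumes "1 \<le> K" shows "(\<Sum>n\<in>{K<..2*K}. 1 / real n) \<ge> 1/2"
proof -
  have "\<forall>n\<in>{K<..2*K}. 1 / real (2*K) \<le> 1 / real n"
    using assms by (auto intro!: divide_left_mono simp: of_nat_le_iff)
  then have "real (card {K<..2*K}) * (1 / real (2*K)) \<le> (\<Sum>n\<in>{K<..2*K}. 1 / real n)"
    by (intro sum_bounded_below) auto
  moreover have "real (card {K<..2*K}) * (1 / real (2*K)) = 1/2" using assms by simp
  ultimately show ?thesis by simp
qed

lemma harm4:
  assumes "1 \<le> M" shows "(\<Sum>n\<in>{M<..4*M}. 1 / real n) \<ge> 1"
proof -
  have eq: "{M<..4*M} = {M<..2*M} \<union> {2*M<..2*(2*M)}" by auto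
  have "(\<Sum>n\<in>{M<..4*M}. 1 / real n) = (\<Sum>n\<in>{M<..2*M}. 1 / real n) + (\<Sum>n\<in>{2*M<..2*(2*M)}. 1 / real n)"
    unfolding eq by (rule sum.union_disjoint) auto
  moreover have "(\<Sum>n\<in>{M<..2*M}. 1 / real n) \<ge> 1/2" using harm_block assms by blast
  moreover have "(\<Sum>n\<in>{2*M<..2*(2*M)}. 1 / real n) \<ge> 1/2" using harm_block[of "2*M"] assms by simp
  ultimately show ?thesis by simp
qed

lemma egypt_one_aux:
  assumes "1 \<le> M"
  shows "\<exists>S. finite S \<and> (\<forall>n\<in>S. M < n) \<and> (\<Sum>n\<in>S. 1 / real n) = 1"
proof -
  define H where "H b = (\<Sum>n\<in>{M<..b}. 1 / real n)" for b
  define b0 where "b0 = (LEAST b. 1 \<le> H b)"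
  have P4: "1 \<le> H (4*M)" using harm4[OF assms] unfolding H_def by simp
  have Pb0: "1 \<le> H b0" unfolding b0_def by (rule LeastI[of _ "4*M"]) (rule P4)
  have b0M: "M < b0"
  proof (rule ccontr)
    assume "\<not> M < b0" then have "{M<..b0} = {}" by auto
    then show False using Pb0 unfolding H_def by simp
  qed
  have Hprev: "H (b0 - 1) < 1"
  proof -
    have "\<not> 1 \<le> H (b0 - 1)" unfolding b0_def by (rule not_less_Least) (use b0M b0_def in auto)
    then show ?thesis by simp
  qed
  have split: "{M<..b0} = insert b0 {M<..b0-1}" using b0M by auto
  have Hb0: "H b0 = H (b0 - 1) + 1 / real b0"
    unfolding H_def split by (subst sum.insert) auto
  define r where "r = 1 - H (b0 - 1)"
  have rpos: "0 < r" using Hprev unfolding r_def by simp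
  have rle: "r \<le> 1 / real b0" using Pb0 Hb0 unfolding r_def by simp
  show ?thesis
  proof (cases "r = 1 / real b0")
    case True
    then have "H b0 = 1" using Hb0 unfolding r_def by simp
    then show ?thesis unfolding H_def by (intro exI[of _ "{M<..b0}"]) auto
  next
    case False
    then have rlt: "r < 1 / real b0" using rle by simp
    have "r \<in> \<rat>" unfolding r_def H_def by (intro Rats_diff Rats_sum) auto
    then obtain a c :: nat where ac: "c \<noteq> 0" "\<bar>r\<bar> = real a / real c"
      by (rule Rats_abs_nat_div_natE)
    have rac: "r = real a / real c" using ac rpos by simp
    have "0 < a" using rac rpos ac(1) by (cases "a = 0") auto
    have b0a: "b0 * a < c"
    proof -
      have "real a / real c < 1 / real b0" using rlt rac by simp
      then have "real a * real b0 < real c" using ac(1) b0M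
        by (simp add: field_simps)
      then show ?thesis by (simp flip: of_nat_mult add: mult.commute)
    qed
    have "a < c" using b0a b0M
      by (metis less_le_trans mult_le_mono1 mult_1 Suc_leI gr_implies_not0 less_one not_less)
    obtain S where S: "finite S" "\<forall>n\<in>S. b0 < n" "(\<Sum>n\<in>S. 1 / real n) = real a / real c"
      using greedy[OF \<open>0 < a\<close> \<open>a < c\<close> b0a] by blast
    have disj: "{M<..b0-1} \<inter> S = {}"
    proof (rule ccontr)
      assume "{M<..b0-1} \<inter> S \<noteq> {}" then obtain x where "x \<in> S" "x \<le> b0 - 1" by auto
      then show False using S(2) by fastforce
    qed
    have "(\<Sum>n\<in>{M<..b0-1} \<union> S. 1 / real n) = H (b0 - 1) + r"
      unfolding H_def by (subst sum.union_disjoint[OF _ S(1) disj]) (auto simp: S(3) rac)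
    also have "\<dots> = 1" unfolding r_def by simp
    finally show ?thesis using S b0M by (intro exI[of _ "{M<..b0-1} \<union> S"]) auto
  qed
qed

lemma egypt_one: "\<exists>S. finite S \<and> (\<forall>n\<in>S. M < n) \<and> (\<Sum>n\<in>S. 1 / real n) = 1"
  using egypt_one_aux[of "max M 1"] by auto



lemma sum_inverse_prod:
  fixes f :: "nat \<Rightarrow> 'k::field"
  assumes "finite S" "\<forall>n\<in>S. f n \<noteq> 0"
  shows "(\<Sum>n\<in>S. inverse (f n)) = (\<Sum>n\<in>S. \<Prod>m\<in>S - {n}. f m) / (\<Prod>m\<in>S. f m)"
proof -
  have "inverse (f n) = (\<Prod>m\<in>S - {n}. f m) / (\<Prod>m\<in>S. f m)" if "n \<in> S" for n
  proof -
    have "(\<Prod>m\<in>S. f m) = f n * (\<Prod>m\<in>S - {n}. f m)" using prod.remove[OF assms(1) that] .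
    moreover have "(\<Prod>m\<in>S - {n}. f m) \<noteq> 0" using assms by simp
    ultimately show ?thesis using assms that by (simp add: field_simps)
  qed
  then show ?thesis by (simp add: sum_divide_distrib)
qed

lemma egypt_field:
  assumes "\<forall>m::nat. 0 < m \<longrightarrow> (of_nat m :: 'k::field) \<noteq> 0"
  shows "\<exists>S. finite S \<and> (\<forall>n\<in>S. M < n) \<and> (\<Sum>n\<in>S. inverse (of_nat n :: 'k)) = 1"
proof -
  obtain S where S: "finite S" "\<forall>n\<in>S. M < n" "(\<Sum>n\<in>S. 1 / real n) = 1"
    using egypt_one by blast
  have Spos: "\<forall>n\<in>S. 0 < n" using S(2) by auto
  have "(\<Sum>n\<in>S. inverse (real n)) = (\<Sum>n\<in>S. \<Prod>m\<in>S - {n}. real m) / (\<Prod>m\<in>S. real m)"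
    using Spos S(1) by (intro sum_inverse_prod) auto
  moreover have "(\<Prod>m\<in>S. real m) \<noteq> 0" using Spos S(1) by auto
  ultimately have "(\<Sum>n\<in>S. \<Prod>m\<in>S - {n}. real m) = (\<Prod>m\<in>S. real m)"
    using S(3) by (simp add: divide_simps)
  then have nat_id: "(\<Sum>n\<in>S. \<Prod>m\<in>S - {n}. m) = (\<Prod>m\<in>S. m)"
    by (simp only: of_nat_prod [symmetric] of_nat_sum [symmetric] of_nat_eq_iff)
  have "(\<Sum>n\<in>S. inverse (of_nat n :: 'k)) = (\<Sum>n\<in>S. \<Prod>m\<in>S - {n}. of_nat m) / (\<Prod>m\<in>S. of_nat m)"
    using Spos S(1) assms by (intro sum_inverse_prod) auto
  also have "\<dots> = of_nat (\<Sum>n\<in>S. \<Prod>m\<in>S - {n}. m) / of_nat (\<Prod>m\<in>S. m)" by simp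
  also have "\<dots> = 1" unfolding nat_id using assms Spos S(1)
    by (simp add: prod_pos)
  finally show ?thesis using S by blast
qed



definition emb :: "'a::idom \<Rightarrow> 'a fract" where "emb d = Fraction_Field.Fract d 1"

lemma emb_mult [simp]: "emb (a * b) = emb a * emb b" by (simp add: emb_def)
lemma emb_add [simp]: "emb (a + b) = emb a + emb b" by (simp add: emb_def)
lemma emb_diff [simp]: "emb (a - b) = emb a - emb b" by (simp add: emb_def)
lemma emb_one [simp]: "emb 1 = 1" by (simp add: emb_def fract_collapse)
lemma emb_zero [simp]: "emb 0 = 0" by (simp add: emb_def fract_collapse)
lemma emb_eq0 [simp]: "emb a = 0 \<longleftrightarrow> a = 0" by (simp add: emb_def Zero_fract_def eq_fract)
lemma Fract_emb: "b \<noteq> 0 \<Longrightarrow> Fraction_Field.Fract a b = emb a * inverse (emb b)" by (simp add: emb_def)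

lemma f_one_le: "euclidean_function f \<Longrightarrow> a \<noteq> 0 \<Longrightarrow> f 1 \<le> f a"
  unfolding euclidean_function_def by (metis mult_1 one_neq_zero)

locale eucl =
  fixes f :: "'a::idom \<Rightarrow> int" and x :: 'a
  assumes ef: "euclidean_function f" and x0: "x \<noteq> 0" and xnu: "\<not> x dvd 1"
    and xmin: "\<forall>y. y \<noteq> 0 \<and> \<not> y dvd 1 \<longrightarrow> f x \<le> f y"
begin

abbreviation "RR \<equiv> R_of TYPE('a)"
abbreviation "X \<equiv> emb x"

lemma X0: "X \<noteq> 0" using x0 by simp
lemma iX_R: "inverse X \<in> RR" using R_base[OF x0] by (simp add: emb_def)
lemma embR: "c = 0 \<or> c dvd 1 \<Longrightarrow> emb c \<in> RR" using R_emb_unit0 by (simp add: emb_def)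
lemma inv_embR: "c \<noteq> 0 \<Longrightarrow> inverse (emb c) \<in> RR" using R_base by (simp add: emb_def)

lemma usd: "\<exists>q r. b = x * q + r \<and> (r = 0 \<or> r dvd 1)"
proof (cases "b = 0")
  case True then show ?thesis by (intro exI[of _ 0]) simp
next
  case False
  then obtain q r where "b = x * q + r" "r = 0 \<or> f r < f x"
    using ef x0 unfolding euclidean_function_def by blast
  then show ?thesis using xmin by (metis not_le)
qed

lemma deg_exists: "\<exists>n. emb a * inverse X ^ n \<in> RR"
proof (cases "a = 0")
  case True then show ?thesis using R_zero by auto
next
  case False
  then show ?thesis
  proof (induction "nat (f a - f 1)" arbitrary: a rule: less_induct)
    case less
    obtain a1 c0 where a: "a = x * a1 + c0" "c0 = 0 \<or> c0 dvd 1" using usd by blast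
    show ?case
    proof (cases "a1 = 0")
      case True
      then have "emb a \<in> RR" using a embR by simp
      then show ?thesis by (intro exI[of _ 0]) simp
    next
      case False
      obtain q r where qr: "a1 = a * q + r" "r = 0 \<or> f r < f a"
        using ef less.prems False unfolding euclidean_function_def by blast
      obtain m where m: "emb r * inverse X ^ m \<in> RR"
      proof (cases "r = 0")
        case True then show ?thesis using that[of 0] R_zero by simp
      next
        case False
        then have "f r < f a" using qr by simp
        moreover have "f 1 \<le> f r" using f_one_le[OF ef False] .
        ultimately have "nat (f r - f 1) < nat (f a - f 1)" by simp
        then show ?thesis using less.hyps False that by blast
      qed
      define h where "h = 1 - x * q"
      have h0: "h \<noteq> 0"
      proof
        assume "h = 0" then have "1 = x * q" unfolding h_def by simp
        then show False using xnu by (metis dvdI)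
      qed
      have id: "a * h = x * r + c0" unfolding h_def using a qr by (simp add: algebra_simps)
      then have "emb a * emb h = X * emb r + emb c0" by (metis emb_add emb_mult)
      then have eq: "emb a * inverse X ^ Suc m = (emb r * inverse X ^ m + emb c0 * inverse X ^ Suc m) * inverse (emb h)"
        using h0 X0 by (simp add: field_simps power_inverse)
      have "(emb r * inverse X ^ m + emb c0 * inverse X ^ Suc m) * inverse (emb h) \<in> RR"
        using R_mult[OF R_add[OF m R_mult[OF embR[OF a(2)] R_pow[OF iX_R]]] inv_embR[OF h0]] .
      then show ?thesis using eq by metis
    qed
  qed
qed

lemma key: "a \<noteq> 0 \<Longrightarrow> emb a * inverse X ^ n \<in> RR \<Longrightarrow>
   \<exists>m. emb a * inverse X ^ m \<in> RR \<and> X ^ m * inverse (emb a) \<in> RR"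
proof (induction n arbitrary: a)
  case 0
  then show ?case using inv_embR[OF 0(1)] by (intro exI[of _ 0]) simp
next
  case (Suc n)
  show ?case
  proof (cases "emb a * inverse X ^ n \<in> RR")
    case True then show ?thesis using Suc by blast
  next
    case False
    obtain b c where a: "a = x * b + c" "c = 0 \<or> c dvd 1" using usd by blast
    have b0: "b \<noteq> 0"
    proof
      assume "b = 0" then have "emb a \<in> RR" using a embR by simp
      then have "emb a * inverse X ^ n \<in> RR" using iX_R by (intro R_mult R_pow)
      then show False using False by simp
    qed
    have ea: "emb a = X * emb b + emb c" using a by simp
    have "emb b * inverse X ^ n = emb a * inverse X ^ Suc n - emb c * inverse X ^ Suc n"
      using ea X0 by (simp add: field_simps power_inverse)
    moreover have "emb a * inverse X ^ Suc n - emb c * inverse X ^ Suc n \<in> RR"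
      using R_diff[OF Suc.prems(2) R_mult[OF embR[OF a(2)] R_pow[OF iX_R]]] .
    ultimately have "emb b * inverse X ^ n \<in> RR" by simp
    then obtain m where m: "emb b * inverse X ^ m \<in> RR" "X ^ m * inverse (emb b) \<in> RR"
      using Suc.IH b0 by blast
    have e1: "emb a * inverse X ^ Suc m = emb b * inverse X ^ m + emb c * inverse X ^ Suc m"
      using ea X0 by (simp add: field_simps power_inverse)
    have e2: "X ^ Suc m * inverse (emb a) = (X ^ m * inverse (emb b)) * (1 - emb c * inverse (emb a))"
    proof -
      have ea0: "emb a \<noteq> 0" using Suc.prems(1) by simp
      have "1 - emb c * inverse (emb a) = X * emb b * inverse (emb a)"
        using ea ea0 by (simp add: field_simps)
      then have "X ^ m * inverse (emb b) * (1 - emb c * inverse (emb a)) = X ^ m * inverse (emb b) * (X * emb b * inverse (emb a))" by simp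
      also have "\<dots> = X ^ Suc m * inverse (emb a)" using b0 by (simp add: field_simps)
      finally show ?thesis by (rule sym)
    qed
    have "emb a * inverse X ^ Suc m \<in> RR" unfolding e1
      using R_add[OF m(1) R_mult[OF embR[OF a(2)] R_pow[OF iX_R]]] .
    moreover have "X ^ Suc m * inverse (emb a) \<in> RR" unfolding e2
      using R_mult[OF m(2) R_diff[OF R_one R_mult[OF embR[OF a(2)] inv_embR[OF Suc.prems(1)]]]] .
    ultimately show ?thesis by blast
  qed
qed

lemma key2: "a \<noteq> 0 \<Longrightarrow> \<exists>m. emb a * inverse X ^ m \<in> RR \<and> X ^ m * inverse (emb a) \<in> RR"
  using key deg_exists by blast

lemma X_in_R_all: assumes "X \<in> RR" shows "z \<in> RR"
proof -
  obtain a b where z: "z = Fraction_Field.Fract a b" "b \<noteq> 0" by (cases z) auto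
  obtain n where n: "emb a * inverse X ^ n \<in> RR" using deg_exists by blast
  have "emb a = (emb a * inverse X ^ n) * X ^ n" using X0 by (simp add: power_inverse)
  then have "emb a \<in> RR" using n assms by (metis R_mult R_pow)
  then show ?thesis using z inv_embR[OF z(2)] Fract_emb by (metis R_mult)
qed

end


locale eucl2 = eucl +
  assumes nX: "emb x \<notin> R_of TYPE('a)"
begin

definition uR where "uR w \<longleftrightarrow> w \<in> RR \<and> w \<noteq> 0 \<and> inverse w \<in> RR"

lemma uR_mult: "uR a \<Longrightarrow> uR b \<Longrightarrow> uR (a * b)"
  unfolding uR_def by (auto intro: R_mult)

lemma uR_one: "uR 1" unfolding uR_def using R_one by simp

lemma powi_R: assumes "n \<le> 0" shows "X powi n \<in> RR"
proof -
  have "n = - int (nat (-n))" using assms by simp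
  then have "X powi n = inverse X ^ nat (-n)"
    by (metis power_int_minus power_int_of_nat power_inverse)
  then show ?thesis using R_pow[OF iX_R] by simp
qed

lemma pow_nR: assumes "1 \<le> k" shows "X ^ k \<notin> RR"
proof
  assume A: "X ^ k \<in> RR"
  have "X = X ^ k * inverse X ^ (k - 1)"
    using assms X0 by (simp add: power_inverse field_simps flip: power_Suc) 
  then have "X \<in> RR" using A R_mult R_pow[OF iX_R] by metis
  then show False using nX by simp
qed

lemma powi_nR: assumes "1 \<le> n" shows "X powi n \<notin> RR"
proof -
  have "X powi n = X ^ nat n" using assms by (metis power_int_of_nat int_nat_eq order.trans zero_le_one nat_0_le)
  then show ?thesis using pow_nR[of "nat n"] assms by simp
qed

lemma powi_split: "X powi n = X powi m * X powi (n - m)"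
  using power_int_add[of X m "n - m"] X0 by simp

lemma le_of_R:
  assumes "w \<noteq> 0" "w * X powi n \<in> RR" "uR (w * X powi m)"
  shows "n \<le> m"
proof (rule ccontr)
  assume "\<not> n \<le> m"
  then have nm: "1 \<le> n - m" by simp
  have wm0: "w * X powi m \<noteq> 0" using assms(3) unfolding uR_def by simp
  have "w * X powi n = (w * X powi m) * X powi (n - m)" using powi_split[of n m] by simp
  then have "X powi (n - m) = (w * X powi n) * inverse (w * X powi m)"
    using wm0 by (simp add: field_simps)
  then have "X powi (n - m) \<in> RR" using assms(2,3) unfolding uR_def by (metis R_mult)
  then show False using powi_nR[OF nm] by simp
qed

lemma exists_uR: assumes "w \<noteq> 0" shows "\<exists>n. uR (w * X powi n)"
proof -
  obtain a b where w: "w = Fraction_Field.Fract a b" "b \<noteq> 0" by (cases w) auto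
  then have a0: "a \<noteq> 0" using assms by (auto simp: fract_collapse)
  obtain ma where ma: "emb a * inverse X ^ ma \<in> RR" "X ^ ma * inverse (emb a) \<in> RR"
    using key2[OF a0] by blast
  obtain mb where mb: "emb b * inverse X ^ mb \<in> RR" "X ^ mb * inverse (emb b) \<in> RR"
    using key2[OF w(2)] by blast
  have pw: "X powi (int mb - int ma) = X ^ mb * inverse X ^ ma"
    using X0 by (simp add: power_int_diff divide_inverse power_inverse)
  have e1: "w * X powi (int mb - int ma) = (emb a * inverse X ^ ma) * (X ^ mb * inverse (emb b))"
    unfolding pw w(1) Fract_emb[OF w(2)] by (simp add: algebra_simps)
  have e2: "inverse (w * X powi (int mb - int ma)) = (X ^ ma * inverse (emb a)) * (emb b * inverse X ^ mb)"
    unfolding pw w(1) Fract_emb[OF w(2)] using X0 by (simp add: field_simps power_inverse)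
  have "uR (w * X powi (int mb - int ma))"
    unfolding uR_def using e1 e2 ma mb assms X0 R_mult by (metis mult_eq_0_iff power_int_not_zero)
  then show ?thesis by blast
qed

definition v where "v w = (THE n. uR (w * X powi n))"

lemma v_unique: assumes "w \<noteq> 0" "uR (w * X powi n)" shows "v w = n"
  unfolding v_def
proof (rule the_equality)
  show "uR (w * X powi n)" by fact
  fix m assume m: "uR (w * X powi m)"
  have "m \<le> n" using le_of_R[OF assms(1) _ assms(2)] m unfolding uR_def by blast
  moreover have "n \<le> m" using le_of_R[OF assms(1) _ m] assms(2) unfolding uR_def by blast
  ultimately show "m = n" by simp
qed

lemma v_spec: assumes "w \<noteq> 0" shows "uR (w * X powi v w)"
  using exists_uR[OF assms] v_unique[OF assms] by metis

lemma v_ge: assumes "w \<noteq> 0" "w * X powi n \<in> RR" shows "n \<le> v w"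
  using le_of_R[OF assms v_spec[OF assms(1)]] .

lemma dv: "discrete_valuation v"
  unfolding discrete_valuation_def
proof (intro conjI allI impI)
  fix n :: int
  have "X powi (-n) * X powi n = 1" using X0 by (simp add: power_int_minus)
  then have "uR (X powi (-n) * X powi n)" using uR_one by simp
  moreover have "X powi (-n) \<noteq> 0" using X0 by (simp add: power_int_not_zero)
  ultimately show "\<exists>w. w \<noteq> 0 \<and> v w = n" using v_unique by blast
next
  fix w z :: "'a fract" assume "w \<noteq> 0 \<and> z \<noteq> 0"
  then have wz: "w \<noteq> 0" "z \<noteq> 0" by auto
  have "(w * z) * X powi (v w + v z) = (w * X powi v w) * (z * X powi v z)"
    using X0 by (simp add: power_int_add algebra_simps)
  then have "uR ((w * z) * X powi (v w + v z))" using uR_mult v_spec wz by metis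
  then show "v (w * z) = v w + v z" using v_unique wz by simp
next
  fix w z :: "'a fract" assume "w \<noteq> 0 \<and> z \<noteq> 0 \<and> w + z \<noteq> 0"
  then have wz: "w \<noteq> 0" "z \<noteq> 0" "w + z \<noteq> 0" by auto
  have gen: "v a \<le> v (a + b)" if "a \<noteq> 0" "b \<noteq> 0" "a + b \<noteq> 0" "v a \<le> v b" for a b
  proof -
    have "(a + b) * X powi v a = a * X powi v a + (b * X powi v b) * X powi (v a - v b)"
      using powi_split[of "v a" "v b"] by (simp add: algebra_simps)
    moreover have "X powi (v a - v b) \<in> RR" using that(4) by (intro powi_R) simp
    ultimately have "(a + b) * X powi v a \<in> RR"
      using v_spec[OF that(1)] v_spec[OF that(2)] unfolding uR_def by (metis R_add R_mult)
    then show ?thesis using v_ge that(3) by blast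
  qed
  show "v (w + z) \<ge> min (v w) (v z)"
  proof (cases "v w \<le> v z")
    case True then show ?thesis using gen[OF wz True] by simp
  next
    case False then show ?thesis using gen[of z w] wz by (simp add: add.commute)
  qed
qed

lemma R_char: "RR = {y. y = 0 \<or> 0 \<le> v y}"
proof (intro set_eqI iffI)
  fix y assume "y \<in> RR"
  then show "y \<in> {y. y = 0 \<or> 0 \<le> v y}" using v_ge[of y 0] by auto
next
  fix y assume "y \<in> {y. y = 0 \<or> 0 \<le> v y}"
  then consider "y = 0" | "y \<noteq> 0" "0 \<le> v y" by auto
  then show "y \<in> RR"
  proof cases
    case 1 then show ?thesis using R_zero by simp
  next
    case 2
    have "y = (y * X powi v y) * X powi (- v y)" using X0 by (simp add: power_int_minus)
    moreover have "X powi (- v y) \<in> RR" using 2 by (intro powi_R) simp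
    ultimately show ?thesis using v_spec[OF 2(1)] unfolding uR_def by (metis R_mult)
  qed
qed

lemma DVR: "is_DVR_in RR"
  unfolding is_DVR_in_def using dv R_char by blast

lemma unit_add: assumes "(u::'a) dvd 1" "w dvd 1" shows "u + w = 0 \<or> u + w dvd 1"
proof -
  obtain b c where s: "u + w = x * b + c" "c = 0 \<or> c dvd 1" using usd by blast
  have b0: "b = 0"
  proof (rule ccontr)
    assume b0: "b \<noteq> 0"
    have "emb (u + w) \<in> RR" using embR assms by (simp add: R_add)
    then have "X * emb b \<in> RR" using s embR[OF s(2)]
      by (metis R_diff add_diff_cancel_right' emb_add emb_mult)
    then have "X * emb b * inverse (emb b) \<in> RR" using inv_embR[OF b0] R_mult by blast
    moreover have "X * emb b * inverse (emb b) = X" using b0 by simp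
    ultimately show False using nX by simp
  qed
  then show ?thesis using s by simp
qed

lemma field: "subfield_of ({u :: 'a. u dvd 1} \<union> {0})"
  unfolding subfield_of_def
proof (intro conjI ballI impI)
  fix a b :: 'a assume "a \<in> {u. u dvd 1} \<union> {0}" "b \<in> {u. u dvd 1} \<union> {0}"
  then show "a + b \<in> {u. u dvd 1} \<union> {0}" using unit_add by auto
next
  fix a b :: 'a assume "a \<in> {u. u dvd 1} \<union> {0}" "b \<in> {u. u dvd 1} \<union> {0}"
  then show "a * b \<in> {u. u dvd 1} \<union> {0}"
  proof (elim UnE)
    assume "a \<in> {u. u dvd 1}" "b \<in> {u. u dvd 1}"
    then show ?thesis using mult_dvd_mono[of a 1 b 1] by simp
  qed auto
next
  fix a :: 'a assume "a \<in> {u. u dvd 1} \<union> {0}"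
  then show "- a \<in> {u. u dvd 1} \<union> {0}" by auto
next
  fix a :: 'a assume "a \<in> {u. u dvd 1} \<union> {0}" "a \<noteq> 0"
  then obtain b where "1 = a * b" by (auto elim: dvdE)
  then show "\<exists>b\<in>{u. u dvd 1} \<union> {0}. a * b = 1" by (intro bexI[of _ b]) (auto intro: dvdI[of _ _ a] simp: mult.commute)
qed auto

end


lemma char0:
  assumes "(2::'a::idom) \<noteq> 0" "\<not> (2::'a) dvd 1"
  shows "0 < m \<Longrightarrow> (of_nat m :: 'a) \<noteq> 0"
proof (induction m rule: less_induct)
  case (less m)
  show ?case
  proof
    assume m0: "(of_nat m :: 'a) = 0"
    define k where "k = m div 2"
    have k: "m = 2 * k \<or> m = 2 * k + 1" unfolding k_def by presburger
    show False
    proof (cases "m = 2 * k")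
      case True
      then have "0 < k" "k < m" using less.prems by auto
      moreover have "(2::'a) * of_nat k = 0" using m0 True by simp
      ultimately show False using less.IH[of k] assms(1) by simp
    next
      case False
      then have m: "m = 2 * k + 1" using k by simp
      have e: "(of_nat (2 * (k + 1)) :: 'a) = of_nat m + 1" unfolding m by simp
      have "(2::'a) * of_nat (k + 1) = 1" using e m0 by (simp only: of_nat_mult of_nat_numeral add_0)
      then have "(2::'a) dvd 1" by (rule dvdI[OF sym])
      then show False using assms(2) by simp
    qed
  qed
qed

lemma of_nat_lt_ne:
  assumes "\<forall>m. 0 < m \<longrightarrow> (of_nat m :: 'a::idom) \<noteq> 0" "n < n'"
  shows "(of_nat n :: 'a) \<noteq> of_nat n'"
proof
  assume e: "(of_nat n :: 'a) = of_nat n'"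
  have "n' = n + (n' - n)" using assms(2) by simp
  then have "(of_nat n' :: 'a) = of_nat (n + (n' - n))" by (rule arg_cong)
  then have "(of_nat n' :: 'a) = of_nat n + of_nat (n' - n)" by (simp only: of_nat_add)
  then have "(of_nat (n' - n) :: 'a) = 0" using e by simp
  moreover have "0 < n' - n" using assms(2) by simp
  ultimately show False using assms(1) by blast
qed

lemma of_nat_inj_char0:
  assumes "\<forall>m. 0 < m \<longrightarrow> (of_nat m :: 'a::idom) \<noteq> 0"
  shows "inj (of_nat :: nat \<Rightarrow> 'a)"
proof (rule injI)
  fix n n' assume e: "(of_nat n :: 'a) = of_nat n'"
  show "n = n'"
  proof (rule ccontr)
    assume "n \<noteq> n'"
    then consider "n < n'" | "n' < n" by linarith
    then show False using of_nat_lt_ne[OF assms] e by cases metis+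
  qed
qed

lemma CL_flex:
  assumes ch: "\<forall>m. 0 < m \<longrightarrow> (of_nat m :: 'a::idom) \<noteq> 0"
  shows "CLprop TYPE('a)"
  unfolding CLprop_def
proof (intro allI impI)
  fix S :: "'a set" and d :: 'a
  assume S: "finite S" "0 \<notin> S" and d0: "d \<noteq> 0"
  define g where "g n = d * of_nat n" for n :: nat
  have injg: "inj g"
  proof (rule injI)
    fix n n' assume "g n = g n'"
    then have "(of_nat n :: 'a) = of_nat n'" using d0 unfolding g_def by simp
    then show "n = n'" using injD[OF of_nat_inj_char0[OF ch]] by blast
  qed
  have finA: "finite (g -` S)" using finite_vimageI[OF S(1) injg] .
  obtain M where M: "\<forall>n\<in>g -` S. n \<le> M" using finA by (meson finite_nat_set_iff_bounded_le)
  have chK: "\<forall>m::nat. 0 < m \<longrightarrow> (of_nat m :: 'a fract) \<noteq> 0"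
  proof (intro allI impI)
    fix m :: nat assume "0 < m"
    then have "(of_nat m :: 'a) \<noteq> 0" using ch by blast
    then have "emb (of_nat m :: 'a) \<noteq> 0" by simp
    then show "(of_nat m :: 'a fract) \<noteq> 0" by (metis Fraction_Field.Fract_of_nat_eq emb_def)
  qed
  obtain S' where S': "finite S'" "\<forall>n\<in>S'. M < n" "(\<Sum>n\<in>S'. inverse (of_nat n :: 'a fract)) = 1"
    using egypt_field[OF chK, of M] by blast
  define T where "T = g ` S'"
  have disj: "S \<inter> T = {}"
  proof (rule ccontr)
    assume "S \<inter> T \<noteq> {}"
    then obtain n where n: "n \<in> S'" "g n \<in> S" unfolding T_def by blast
    then have "n \<le> M" using M by blast
    then show False using S'(2) n(1) by fastforce
  qed
  have T0: "0 \<notin> T"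
  proof
    assume "0 \<in> T"
    then obtain n where n: "n \<in> S'" "g n = 0" unfolding T_def by (metis imageE)
    then have "(of_nat n :: 'a) = 0" using d0 unfolding g_def by simp
    moreover have "0 < n" using S'(2) n(1) by fastforce
    ultimately show False using ch by blast
  qed
  have sumT: "(\<Sum>t\<in>T. inverse (Fraction_Field.Fract t 1)) = inverse (Fraction_Field.Fract d 1)"
  proof -
    have "(\<Sum>t\<in>T. inverse (Fraction_Field.Fract t 1)) = (\<Sum>n\<in>S'. inverse (Fraction_Field.Fract (g n) 1))"
      unfolding T_def by (rule sum.reindex_cong[of g]) (use injg in \<open>auto intro: inj_on_subset\<close>)
    also have "\<dots> = (\<Sum>n\<in>S'. inverse (Fraction_Field.Fract d 1) * inverse (of_nat n :: 'a fract))"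
    proof (rule sum.cong[OF refl])
      fix n
      have "Fraction_Field.Fract (g n) 1 = Fraction_Field.Fract d 1 * Fraction_Field.Fract (of_nat n) 1" unfolding g_def by simp
      also have "\<dots> = Fraction_Field.Fract d 1 * of_nat n" by (simp only: Fraction_Field.Fract_of_nat_eq)
      finally show "inverse (Fraction_Field.Fract (g n) 1) = inverse (Fraction_Field.Fract d 1) * inverse (of_nat n :: 'a fract)"
        by (simp only: inverse_mult_distrib)
    qed
    also have "\<dots> = inverse (Fraction_Field.Fract d 1)" using S'(3) by (simp add: sum_distrib_left[symmetric])
    finally show ?thesis .
  qed
  show "D_egyptian ((\<Sum>s\<in>S. inverse (Fraction_Field.Fract s 1)) + inverse (Fraction_Field.Fract d 1))"
    unfolding D_egyptian_def
  proof (intro exI[of _ "S \<union> T"] conjI)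
    show "finite (S \<union> T)" using S(1) S'(1) unfolding T_def by simp
    show "0 \<notin> S \<union> T" using S(2) T0 by simp
    have "finite T" using S'(1) unfolding T_def by simp
    then show "(\<Sum>s\<in>S. inverse (Fraction_Field.Fract s 1)) + inverse (Fraction_Field.Fract d 1) = (\<Sum>s\<in>S \<union> T. inverse (Fraction_Field.Fract s 1))"
      by (subst sum.union_disjoint[OF S(1) \<open>finite T\<close> disj]) (simp only: sumT)
  qed
qed

theorem theorem2p10:
  assumes "euclidean_domain TYPE('a::idom)"
    and "\<not> egyptian_domain TYPE('a)"
  shows "is_DVR_in (R_of TYPE('a)) \<and> subfield_of ({u :: 'a. u dvd 1} \<union> {0})"
proof -
  obtain f where ef: "euclidean_function (f::'a \<Rightarrow> int)"
    using assms(1) unfolding euclidean_domain_def by blast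
  have ex_nu: "\<exists>y::'a. y \<noteq> 0 \<and> \<not> y dvd 1"
  proof (rule ccontr)
    assume "\<not> ?thesis" then have allu: "\<forall>y::'a. y \<noteq> 0 \<longrightarrow> y dvd 1" by auto
    have "egyptian_domain TYPE('a)" unfolding egyptian_domain_def D_egyptian_def
    proof (intro allI impI)
      fix z :: "'a fract" assume "z \<noteq> 0"
      obtain a b where z: "z = Fraction_Field.Fract a b" "b \<noteq> 0" by (cases z) auto
      then have "a \<noteq> 0" using \<open>z \<noteq> 0\<close> by (auto simp: fract_collapse)
      then have "a dvd 1" using allu by blast
      then obtain a' :: 'a where a': "1 = a * a'" by (rule dvdE)
      have "b * a' \<noteq> 0" using a' z(2) by auto
      moreover have "z = inverse (Fraction_Field.Fract (b * a') 1)"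
        using z a' \<open>b * a' \<noteq> 0\<close> by (simp add: eq_fract algebra_simps)
      ultimately show "\<exists>S. finite S \<and> 0 \<notin> S \<and> z = (\<Sum>d\<in>S. inverse (Fraction_Field.Fract d 1))"
        by (intro exI[of _ "{b * a'}"]) simp
    qed
    then show False using assms(2) by simp
  qed
  define P where "P y = (y \<noteq> 0 \<and> \<not> y dvd 1)" for y :: 'a
  obtain x where x: "P x" "\<forall>y. P y \<longrightarrow> nat (f x - f 1) \<le> nat (f y - f 1)"
    using ex_has_least_nat[of P _ "\<lambda>y. nat (f y - f 1)"] ex_nu unfolding P_def by blast
  have xmin: "\<forall>y. y \<noteq> 0 \<and> \<not> y dvd 1 \<longrightarrow> f x \<le> f y"
  proof (intro allI impI)
    fix y :: 'a assume "y \<noteq> 0 \<and> \<not> y dvd 1"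
    then have "nat (f x - f 1) \<le> nat (f y - f 1)" "f 1 \<le> f y" using x(2) f_one_le[OF ef] unfolding P_def by auto
    moreover have "f 1 \<le> f x" using f_one_le[OF ef] x(1) unfolding P_def by auto
    ultimately show "f x \<le> f y" by linarith
  qed
  interpret eucl f x using ef x(1) xmin unfolding P_def by unfold_locales auto
  have nX: "emb x \<notin> R_of TYPE('a)"
  proof
    assume "emb x \<in> R_of TYPE('a)"
    then have allR: "\<And>z. z \<in> R_of TYPE('a)" using X_in_R_all by blast
    have CL: "CLprop TYPE('a)"
    proof (cases "(2::'a) = 0 \<or> (2::'a) dvd 1")
      case True then show ?thesis by (rule CL_two)
    next
      case False then show ?thesis using char0[of _ ] by (intro CL_flex) auto
    qed
    have "egyptian_domain TYPE('a)" unfolding egyptian_domain_def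
    proof (intro allI impI)
      fix z :: "'a fract"
      obtain L where "0 \<notin> set L" "z = sr L" using R_sr[OF allR[of z]] by blast
      then show "D_egyptian z" using CL_sr[OF CL] by simp
    qed
    then show False using assms(2) by simp
  qed
  interpret eucl2 f x using nX by unfold_locales
  show ?thesis using DVR field by simp
qed


end
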